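(* Let $n\ge2$ and $x=(x_1,\dots,x_n)\in\mathbb R^n$ with $x_i\ne0$ for all $i$ and $x_1+\dots+x_n=0$. Then $$\sum_{\substack{\sigma\in S_n\\ \pi_\sigma(x)\text{ allowed}}}G_n(\pi_\sigma(x))=0.$$
   Context: $S_n$ is the symmetric group on $\{1,\dots,n\}$, $\pi_\sigma(x)=(x_{\sigma(1)},\dots,x_{\sigma(n)})$. For $y\in\mathbb R^n$, $D_i(y)=y_1+\dots+y_i$; $y$ is called allowed if $D_i(y)\ne0$ for all $i=1,\dots,n-1$, and then $G_n(y)=\prod_{i=1}^{n-1}D_i(y)^{-1}$. *)

theory Defs
  imports Complex_Main "HOL-Combinatorics.Permutations"
begin

text \<open>Vectors y in R^n are represented as functions nat => real, using the entries y 1, ..., y n.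
  Permutations sigma in S_n are functions with sigma permutes {1..n}.\<close>

definition perm_vec :: "(nat \<Rightarrow> nat) \<Rightarrow> (nat \<Rightarrow> real) \<Rightarrow> (nat \<Rightarrow> real)" where
  "perm_vec \<sigma> x = (\<lambda>i. x (\<sigma> i))"

definition partial_sum :: "(nat \<Rightarrow> real) \<Rightarrow> nat \<Rightarrow> real" where
  "partial_sum y i = (\<Sum>j=1..i. y j)"

definition allowed :: "nat \<Rightarrow> (nat \<Rightarrow> real) \<Rightarrow> bool" where
  "allowed n y \<longleftrightarrow> (\<forall>i\<in>{1..n-1}. partial_sum y i \<noteq> 0)"

definition G :: "nat \<Rightarrow> (nat \<Rightarrow> real) \<Rightarrow> real" where
  "G n y = (\<Prod>i=1..n-1. inverse (partial_sum y i))"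

end

theory Submission imports Defs "HOL-Combinatorics.Multiset_Permutations" begin


lemma scal: fixes u y :: real assumes "y \<noteq> 0"
  shows "y * inverse u * inverse (u + y) = inverse u - inverse (u + y) + (if u = 0 \<or> u = -y then 1 / y else 0)"
proof (cases "u = 0 \<or> u = -y")
  case True then show ?thesis using assms by (auto simp: inverse_eq_divide)
next
  case False then have "u + y \<noteq> 0" by linarith
  with False assms show ?thesis by (simp add: field_simps)
qed

lemma tele:
  fixes u :: "nat \<Rightarrow> real" and y :: real
  assumes y: "y \<noteq> 0" and k: "k \<ge> 1" and u0: "u 0 = 0" and uk: "u k = - y"
  shows "y^2 * (\<Sum>p\<in>{0..k}. (\<Prod>i\<in>{1..p}. inverse (u i)) * (\<Prod>i\<in>{p..<k}. inverse (u i + y)))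
       = (\<Sum>p\<in>{1..<k}. if u p = 0 \<or> u p = -y then
            (\<Prod>i\<in>{1..<p}. inverse (u i)) * (\<Prod>i\<in>{p<..<k}. inverse (u i + y)) else 0)"
proof -
  define T where "T p = (\<Prod>i\<in>{1..p}. inverse (u i)) * (\<Prod>i\<in>{p..<k}. inverse (u i + y))" for p
  define A where "A p = (\<Prod>i\<in>{1..p}. inverse (u i)) * (\<Prod>i\<in>{p<..<k}. inverse (u i + y))" for p
  define C where "C p = (if u p = 0 \<or> u p = -y then
            (\<Prod>i\<in>{1..<p}. inverse (u i)) * (\<Prod>i\<in>{p<..<k}. inverse (u i + y)) else 0)" for p
  have step: "y * T p = A p - A (p - 1) + C p / y" if p: "1 \<le> p" "p < k" for p
  proof -
    define P where "P = (\<Prod>i\<in>{1..<p}. inverse (u i))"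
    define Q where "Q = (\<Prod>i\<in>{p<..<k}. inverse (u i + y))"
    have e1: "{1..p} = insert p {1..<p}" using p by auto
    have e2: "{p..<k} = insert p {p<..<k}" using p by auto
    have e3: "{1..p-1} = {1..<p}" using p by auto
    have e4: "{p-1<..<k} = {p..<k}" using p by auto
    have T: "T p = P * inverse (u p) * (inverse (u p + y) * Q)"
      unfolding T_def P_def Q_def e1 e2 by (simp add: mult.commute)
    have A1: "A p = P * inverse (u p) * Q"
      unfolding A_def P_def Q_def e1 by (simp add: mult.commute)
    have A2: "A (p - 1) = P * (inverse (u p + y) * Q)"
      unfolding A_def P_def Q_def e3 e4 e2 by simp
    have C: "C p = (if u p = 0 \<or> u p = -y then P * Q else 0)"
      unfolding C_def P_def Q_def by simp
    have "y * T p = P * Q * (y * inverse (u p) * inverse (u p + y))"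
      unfolding T by (simp add: algebra_simps)
    also have "\<dots> = P * Q * (inverse (u p) - inverse (u p + y) + (if u p = 0 \<or> u p = -y then 1 / y else 0))"
      using scal[OF y] by simp
    also have "\<dots> = A p - A (p - 1) + C p / y"
      unfolding A1 A2 C by (simp add: algebra_simps)
    finally show ?thesis .
  qed
  have T0: "T 0 = inverse y * A 0"
  proof -
    have "{0..<k} = insert 0 {0<..<k}" using k by auto
    then show ?thesis unfolding T_def A_def using u0 by simp
  qed
  have Tk: "T k = - inverse y * A (k - 1)"
  proof -
    have "{1..k} = insert k {1..k-1}" using k by auto
    moreover have "{k-1<..<k} = {}" by auto
    moreover have "k \<notin> {1..k-1}" using k by auto
    ultimately show ?thesis unfolding T_def A_def using uk by (simp add: inverse_minus_eq)
  qed
  have "(\<Sum>p\<in>{1..<k}. y * T p) = (\<Sum>p\<in>{1..<k}. A p - A (p - 1)) + (\<Sum>p\<in>{1..<k}. C p) / y"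
    using step by (simp add: sum.distrib sum_divide_distrib)
  also have "(\<Sum>p\<in>{1..<k}. A p - A (p - 1)) = A (k - 1) - A 0"
  proof -
    have "{1..<k} = {Suc 0..k-1}" using k by auto
    then show ?thesis using sum_telescope''[of 0 "k-1" A] by simp
  qed
  finally have mid: "(\<Sum>p\<in>{1..<k}. y * T p) = A (k - 1) - A 0 + (\<Sum>p\<in>{1..<k}. C p) / y" .
  have split: "{0..k} = insert 0 (insert k {1..<k})" using k by auto
  have "y * (\<Sum>p\<in>{0..k}. T p) = y * T 0 + y * T k + (\<Sum>p\<in>{1..<k}. y * T p)"
    unfolding split using k by (simp add: sum_distrib_left algebra_simps)
  also have "\<dots> = (\<Sum>p\<in>{1..<k}. C p) / y"
    unfolding mid T0 Tk using y by (simp add: field_simps)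
  finally have "y * (\<Sum>p\<in>{0..k}. T p) = (\<Sum>p\<in>{1..<k}. C p) / y" .
  then have "y^2 * (\<Sum>p\<in>{0..k}. T p) = (\<Sum>p\<in>{1..<k}. C p)"
    using y by (simp add: power2_eq_square field_simps)
  then show ?thesis unfolding T_def C_def .
qed



definition gl :: "real list \<Rightarrow> real" where
  "gl ys = (\<Prod>i\<in>{1..<length ys}. inverse (sum_list (take i ys)))"

lemma take_add_sum: "sum_list (take (q + j) zs) = sum_list (take q zs) + sum_list (take j (drop q zs))"
  by (simp add: take_add)

lemma prod_shift_q:
  fixes zs :: "real list"
  assumes "q \<le> length zs"
  shows "(\<Prod>i\<in>{q<..<length zs}. inverse (sum_list (take i zs) + c))
       = (\<Prod>j\<in>{1..<length zs - q}. inverse (sum_list (take q zs) + c + sum_list (take j (drop q zs))))"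
proof -
  have h: "sum_list (take (j + q) zs) = sum_list (take q zs) + sum_list (take j (drop q zs))" for j
    using take_add_sum[of q j zs] by (simp add: add.commute)
  have h2: "q < a \<Longrightarrow> sum_list (take q zs) + sum_list (take (a - q) (drop q zs)) = sum_list (take a zs)" for a
    using h[of "a - q"] by simp
  show ?thesis
    by (rule prod.reindex_bij_witness[of _ "\<lambda>j. j + q" "\<lambda>i. i - q"]) (auto simp: h h2)
qed

lemma gl_take: "p \<le> length zs \<Longrightarrow> gl (take p zs) = (\<Prod>i\<in>{1..<p}. inverse (sum_list (take i zs)))"
  unfolding gl_def by (intro prod.cong) (auto simp: min_def)

lemma gl_take_snoc: "p \<le> length zs \<Longrightarrow> gl (take p zs @ [y]) = (\<Prod>i\<in>{1..p}. inverse (sum_list (take i zs)))"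
  unfolding gl_def by (intro prod.cong) (auto simp: min_def)

lemma gl_drop: "p \<le> length zs \<Longrightarrow> gl (drop p zs) =
   (\<Prod>i\<in>{p<..<length zs}. inverse (sum_list (take i zs) + - sum_list (take p zs)))"
  unfolding gl_def by (subst prod_shift_q) auto

lemma gl_cons_drop: "p < length zs \<Longrightarrow> gl (y # drop p zs) =
   inverse y * (\<Prod>i\<in>{p<..<length zs}. inverse (sum_list (take i zs) + (y - sum_list (take p zs))))"
proof -
  assume p': "p < length zs"
  then have p: "p \<le> length zs" by simp
  have "gl (y # drop p zs) = (\<Prod>j\<in>{1..<Suc (length zs - p)}. inverse (sum_list (take j (y # drop p zs))))"
    unfolding gl_def using p by simp
  also have "\<dots> = inverse y * (\<Prod>j\<in>{Suc 1..<Suc (length zs - p)}. inverse (sum_list (take j (y # drop p zs))))"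
    using p' by (subst prod.atLeast_Suc_lessThan) auto
  also have "(\<Prod>j\<in>{Suc 1..<Suc (length zs - p)}. inverse (sum_list (take j (y # drop p zs))))
      = (\<Prod>j\<in>{1..<length zs - p}. inverse (y + sum_list (take j (drop p zs))))"
    by (subst prod.shift_bounds_Suc_ivl) simp
  also have "\<dots> = (\<Prod>i\<in>{p<..<length zs}. inverse (sum_list (take i zs) + (y - sum_list (take p zs))))"
    using prod_shift_q[OF p, of "y - sum_list (take p zs)"] by simp
  finally show ?thesis .
qed

lemma gl_ins: "p \<le> length zs \<Longrightarrow> gl (take p zs @ y # drop p zs) =
   (\<Prod>i\<in>{1..p}. inverse (sum_list (take i zs))) * (\<Prod>i\<in>{p..<length zs}. inverse (sum_list (take i zs) + y))"
proof -
  assume p: "p \<le> length zs"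
  let ?w = "take p zs @ y # drop p zs"
  have "gl ?w = (\<Prod>i\<in>{1..<Suc (length zs)}. inverse (sum_list (take i ?w)))"
    unfolding gl_def using p by simp
  also have "\<dots> = (\<Prod>i\<in>{1..<Suc p}. inverse (sum_list (take i ?w))) * (\<Prod>i\<in>{Suc p..<Suc (length zs)}. inverse (sum_list (take i ?w)))"
    using p by (subst prod.atLeastLessThan_concat) auto
  also have "(\<Prod>i\<in>{1..<Suc p}. inverse (sum_list (take i ?w))) = (\<Prod>i\<in>{1..p}. inverse (sum_list (take i zs)))"
    using p by (intro prod.cong) (auto simp: min_def)
  also have "(\<Prod>i\<in>{Suc p..<Suc (length zs)}. inverse (sum_list (take i ?w))) = (\<Prod>i\<in>{p..<length zs}. inverse (sum_list (take (Suc i) ?w)))"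
    by (subst prod.shift_bounds_Suc_ivl) simp
  also have "\<dots> = (\<Prod>i\<in>{p..<length zs}. inverse (sum_list (take i zs) + y))"
  proof (intro prod.cong refl)
    fix i assume i: "i \<in> {p..<length zs}"
    have "take (Suc i) ?w = take p zs @ y # take (i - p) (drop p zs)"
      using i p by (simp add: min_def Suc_diff_le)
    moreover have "take i zs = take p zs @ take (i - p) (drop p zs)"
      using i take_add[of p "i - p" zs] by simp
    ultimately show "inverse (sum_list (take (Suc i) ?w)) = inverse (sum_list (take i zs) + y)"
      by simp
  qed
  finally show ?thesis .
qed



lemma split_sum:
  fixes h :: "'a list \<Rightarrow> 'a list \<Rightarrow> real"
  assumes T: "finite T" and p: "p \<le> card T"
  shows "(\<Sum>L\<in>permutations_of_set T. h (take p L) (drop p L)) =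
         (\<Sum>A\<in>{A. A \<subseteq> T \<and> card A = p}. \<Sum>\<alpha>\<in>permutations_of_set A. \<Sum>\<beta>\<in>permutations_of_set (T - A). h \<alpha> \<beta>)"
proof -
  let ?I = "{A. A \<subseteq> T \<and> card A = p}"
  let ?S = "Sigma ?I (\<lambda>A. permutations_of_set A \<times> permutations_of_set (T - A))"
  have finI: "finite ?I" using T by (auto intro: finite_subset[of _ "Pow T"])
  have "(\<Sum>A\<in>?I. \<Sum>\<alpha>\<in>permutations_of_set A. \<Sum>\<beta>\<in>permutations_of_set (T - A). h \<alpha> \<beta>)
      = (\<Sum>A\<in>?I. \<Sum>z\<in>permutations_of_set A \<times> permutations_of_set (T - A). h (fst z) (snd z))"
    by (simp only: sum.cartesian_product case_prod_unfold)
  also have "\<dots> = (\<Sum>w\<in>?S. h (fst (snd w)) (snd (snd w)))"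
    using finI by (subst sum.Sigma) (auto simp: case_prod_unfold)
  also have "\<dots> = (\<Sum>L\<in>permutations_of_set T. (\<lambda>w. h (fst (snd w)) (snd (snd w))) ((\<lambda>L. (set (take p L), take p L, drop p L)) L))"
  proof (rule sum.reindex_bij_betw[symmetric])
    show "bij_betw (\<lambda>L. (set (take p L), take p L, drop p L)) (permutations_of_set T) ?S"
    proof (rule bij_betwI[where g = "\<lambda>w. fst (snd w) @ snd (snd w)"])
      show "(\<lambda>L. (set (take p L), take p L, drop p L)) \<in> permutations_of_set T \<rightarrow> ?S"
      proof
        fix L assume L: "L \<in> permutations_of_set T"
        then have d: "distinct L" and s: "set L = T" by (auto simp: permutations_of_set_def)
        have len: "length L = card T" using d s distinct_card by fastforce
        have dt: "distinct (take p L)" "distinct (drop p L)" using d by auto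
        have u: "set (take p L) \<union> set (drop p L) = T" using s by (metis append_take_drop_id set_append)
        have dj: "set (take p L) \<inter> set (drop p L) = {}" using d by (metis append_take_drop_id distinct_append)
        have "set (drop p L) = T - set (take p L)" using u dj by blast
        moreover have "card (set (take p L)) = p" using dt len p by (simp add: distinct_card min_def)
        moreover have "set (take p L) \<subseteq> T" using s by (auto dest: in_set_takeD)
        ultimately show "(set (take p L), take p L, drop p L) \<in> ?S"
          using dt by (auto simp: permutations_of_set_def)
      qed
      show "(\<lambda>w. fst (snd w) @ snd (snd w)) \<in> ?S \<rightarrow> permutations_of_set T"
        by (auto simp: permutations_of_set_def)
      show "fst (snd (set (take p L), take p L, drop p L)) @ snd (snd (set (take p L), take p L, drop p L)) = L" for L :: "'a list"
        by simp
      fix w assume w: "w \<in> ?S"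
      then obtain A a b where wd: "w = (A, a, b)" "A \<subseteq> T" "card A = p" "a \<in> permutations_of_set A" "b \<in> permutations_of_set (T - A)"
        by auto
      have "length a = p" using wd by (auto simp: permutations_of_set_def distinct_card[symmetric])
      then show "(set (take p (fst (snd w) @ snd (snd w))), take p (fst (snd w) @ snd (snd w)), drop p (fst (snd w) @ snd (snd w))) = w"
        using wd by (auto simp: permutations_of_set_def)
    qed
  qed
  also have "\<dots> = (\<Sum>L\<in>permutations_of_set T. h (take p L) (drop p L))" by simp
  finally show ?thesis by (rule sym)
qed


lemma ins_sum:
  fixes f :: "'a list \<Rightarrow> real"
  assumes T: "finite T" and m: "m \<in> T"
  shows "(\<Sum>L\<in>permutations_of_set T. f L) =
         (\<Sum>L'\<in>permutations_of_set (T - {m}). \<Sum>p\<in>{0..card T - 1}. f (take p L' @ m # drop p L'))"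
proof -
  let ?S = "permutations_of_set (T - {m}) \<times> {0..card T - 1}"
  let ?ins = "\<lambda>z. take (snd z) (fst z) @ m # drop (snd z) (fst z)"
  have "(\<Sum>L'\<in>permutations_of_set (T - {m}). \<Sum>p\<in>{0..card T - 1}. f (take p L' @ m # drop p L'))
     = (\<Sum>z\<in>?S. f (?ins z))"
    by (simp only: sum.cartesian_product case_prod_unfold)
  also have "\<dots> = (\<Sum>L\<in>permutations_of_set T. f L)"
  proof (rule sum.reindex_bij_betw)
    have ct: "card (T - {m}) = card T - 1" using T m by simp
    show "bij_betw ?ins ?S (permutations_of_set T)"
    proof (rule bij_betw_imageI)
      show "inj_on ?ins ?S"
      proof (rule inj_onI)
        fix z1 z2 assume z1: "z1 \<in> ?S" and z2: "z2 \<in> ?S" and e: "?ins z1 = ?ins z2"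
        obtain L1 p1 where d1: "z1 = (L1, p1)" by force
        obtain L2 p2 where d2: "z2 = (L2, p2)" by force
        have l1a: "distinct L1 \<and> set L1 = T - {m}" using z1 d1 by (simp add: permutations_of_set_def)
        have l1b: "p1 \<le> length L1" using z1 d1 ct l1a distinct_card[of L1] by simp
        note l1 = l1a[THEN conjunct1] l1a[THEN conjunct2] l1b
        have l2a: "distinct L2 \<and> set L2 = T - {m}" using z2 d2 by (simp add: permutations_of_set_def)
        have l2b: "p2 \<le> length L2" using z2 d2 ct l2a distinct_card[of L2] by simp
        note l2 = l2a[THEN conjunct1] l2a[THEN conjunct2] l2b
        have "m \<notin> set (take p1 L1)" "m \<notin> set (drop p1 L1)" using l1 by (auto dest: in_set_takeD in_set_dropD)
        moreover have "m \<notin> set (take p2 L2)" "m \<notin> set (drop p2 L2)" using l2 by (auto dest: in_set_takeD in_set_dropD)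
        ultimately have "take p1 L1 = take p2 L2 \<and> drop p1 L1 = drop p2 L2"
          using e d1 d2 by (simp add: append_Cons_eq_iff)
        moreover have "p1 = p2"
        proof -
          have "p1 = length (take p1 L1)" "p2 = length (take p2 L2)" using l1b l2b by auto
          with calculation show ?thesis by simp
        qed
        ultimately show "z1 = z2" using d1 d2 by (metis append_take_drop_id)
      qed
      show "?ins ` ?S = permutations_of_set T"
      proof
        show "?ins ` ?S \<subseteq> permutations_of_set T"
        proof
          fix L assume "L \<in> ?ins ` ?S"
          then obtain L' p where L: "L = take p L' @ m # drop p L'" "L' \<in> permutations_of_set (T - {m})" by auto
          then have dL: "distinct L'" and sL: "set L' = T - {m}" by (auto simp: permutations_of_set_def)
          have u: "set (take p L') \<union> set (drop p L') = T - {m}" using sL by (metis append_take_drop_id set_append)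
          have dj: "set (take p L') \<inter> set (drop p L') = {}" using dL by (metis append_take_drop_id distinct_append)
          have mt: "m \<notin> set (take p L')" "m \<notin> set (drop p L')" using u by auto
          have "distinct L" unfolding L(1) using dL dj mt by simp
          moreover have "set L = T" unfolding L(1) using u m by auto
          ultimately show "L \<in> permutations_of_set T" by (auto simp: permutations_of_set_def)
        qed
        show "permutations_of_set T \<subseteq> ?ins ` ?S"
        proof
          fix L assume L: "L \<in> permutations_of_set T"
          then have d: "distinct L" "set L = T" by (auto simp: permutations_of_set_def)
          then obtain xs ys where xy: "L = xs @ m # ys" using m split_list by metis
          have "xs @ ys \<in> permutations_of_set (T - {m})"
            using d xy by (auto simp: permutations_of_set_def)
          moreover have "length xs \<le> card T - 1"
            using d xy distinct_card[of L] by auto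
          ultimately have "(xs @ ys, length xs) \<in> ?S" by auto
          moreover have "L = ?ins (xs @ ys, length xs)" using xy by simp
          ultimately show "L \<in> ?ins ` ?S" by blast
        qed
      qed
    qed
  qed
  finally show ?thesis by simp
qed


lemma listE:
  fixes zs :: "real list" and y :: real
  assumes y: "y \<noteq> 0" and k: "length zs \<ge> 1" and s: "sum_list zs = - y"
  shows "y^2 * (\<Sum>p\<in>{0..length zs}. gl (take p zs @ y # drop p zs)) =
    (\<Sum>p\<in>{1..<length zs}.
       (if sum_list (take p zs) = 0 then gl (take p zs) * (y * gl (y # drop p zs)) else 0)
     - (if sum_list (drop p zs) = 0 then y * gl (take p zs @ [y]) * gl (drop p zs) else 0))"
proof -
  let ?k = "length zs"
  let ?u = "\<lambda>i. sum_list (take i zs)"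
  have u0: "?u 0 = 0" by simp
  have uk: "?u ?k = - y" using s by simp
  have "(\<Sum>p\<in>{0..?k}. gl (take p zs @ y # drop p zs)) =
        (\<Sum>p\<in>{0..?k}. (\<Prod>i\<in>{1..p}. inverse (?u i)) * (\<Prod>i\<in>{p..<?k}. inverse (?u i + y)))"
    by (intro sum.cong refl) (simp add: gl_ins)
  then have "y^2 * (\<Sum>p\<in>{0..?k}. gl (take p zs @ y # drop p zs)) =
     (\<Sum>p\<in>{1..<?k}. if ?u p = 0 \<or> ?u p = -y then
            (\<Prod>i\<in>{1..<p}. inverse (?u i)) * (\<Prod>i\<in>{p<..<?k}. inverse (?u i + y)) else 0)"
    using tele[of y ?k ?u, OF y k u0 uk] by simp
  also have "\<dots> = (\<Sum>p\<in>{1..<length zs}.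
       (if sum_list (take p zs) = 0 then gl (take p zs) * (y * gl (y # drop p zs)) else 0)
     - (if sum_list (drop p zs) = 0 then y * gl (take p zs @ [y]) * gl (drop p zs) else 0))"
  proof (intro sum.cong refl)
    fix p assume p: "p \<in> {1..<?k}"
    then have pl: "p < ?k" "p \<le> ?k" and p1: "1 \<le> p" by auto
    have sd: "sum_list (drop p zs) = - y - ?u p"
      using s by (metis add_diff_cancel_left' append_take_drop_id diff_minus_eq_add sum_list_append uminus_add_conv_diff)
    have e1: "{1..p} = insert p {1..<p}" using p1 by auto
    show "(if ?u p = 0 \<or> ?u p = -y then
            (\<Prod>i\<in>{1..<p}. inverse (?u i)) * (\<Prod>i\<in>{p<..<?k}. inverse (?u i + y)) else 0) =
       (if sum_list (take p zs) = 0 then gl (take p zs) * (y * gl (y # drop p zs)) else 0)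
     - (if sum_list (drop p zs) = 0 then y * gl (take p zs @ [y]) * gl (drop p zs) else 0)"
    proof (cases "?u p = 0")
      case True
      then have "sum_list (drop p zs) \<noteq> 0" using sd y by simp
      then show ?thesis using True y by (simp add: gl_take gl_cons_drop pl)
    next
      case False
      note F = False
      show ?thesis
      proof (cases "?u p = -y")
        case True
        then have sd0: "sum_list (drop p zs) = 0" using sd by simp
        have "gl (take p zs @ [y]) = (\<Prod>i\<in>{1..<p}. inverse (?u i)) * inverse (- y)"
          using gl_take_snoc[OF pl(2), of y] True unfolding e1 by (simp add: mult.commute)
        then show ?thesis using True F sd0 y by (simp add: gl_drop pl inverse_minus_eq)
      next
        case False
        then have "sum_list (drop p zs) \<noteq> 0" using sd by simp
        then show ?thesis using False F by simp
      qed
    qed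
  qed
  finally show ?thesis .
qed


lemma main_zero:
  fixes x :: "nat \<Rightarrow> real"
  shows "finite T \<Longrightarrow> T \<noteq> {} \<Longrightarrow> (\<forall>t\<in>T. x t \<noteq> 0) \<Longrightarrow> sum x T = 0 \<Longrightarrow>
         (\<Sum>L\<in>permutations_of_set T. gl (map x L)) = 0"
proof (induction "card T" arbitrary: T rule: less_induct)
  case less
  note IH = less.hyps
  have fin: "finite T" and ne: "T \<noteq> {}" and nz: "\<forall>t\<in>T. x t \<noteq> 0" and s0: "sum x T = 0"
    using less.prems by auto
  obtain m where m: "m \<in> T" using ne by auto
  define y where "y = x m"
  define T' where "T' = T - {m}"
  define k where "k = card T'"
  have y: "y \<noteq> 0" using nz m y_def by auto
  have finT': "finite T'" using fin T'_def by auto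
  have sT': "sum x T' = - y"
    using s0 sum.remove[OF fin m, of x] unfolding T'_def y_def by simp
  have T'ne: "T' \<noteq> {}" using sT' y by auto
  have k1: "k \<ge> 1" using T'ne finT' k_def by (simp add: Suc_le_eq card_gt_0_iff)
  have kT: "card T - 1 = k" unfolding k_def T'_def using fin m by simp
  have kT2: "k < card T" using kT k1 by linarith
  define F1 where "F1 p L' = (let zs = map x L' in
       (if sum_list (take p zs) = 0 then gl (take p zs) * (y * gl (y # drop p zs)) else 0))" for p L'
  define F2 where "F2 p L' = (let zs = map x L' in
       (if sum_list (drop p zs) = 0 then y * gl (take p zs @ [y]) * gl (drop p zs) else 0))" for p L'
  have step1: "(\<Sum>L\<in>permutations_of_set T. gl (map x L)) =
       (\<Sum>L'\<in>permutations_of_set T'. \<Sum>p\<in>{0..k}. gl (take p (map x L') @ y # drop p (map x L')))"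
    unfolding ins_sum[OF fin m] T'_def[symmetric] kT y_def by (simp add: take_map drop_map)
  have per: "y^2 * (\<Sum>p\<in>{0..k}. gl (take p (map x L') @ y # drop p (map x L'))) = (\<Sum>p\<in>{1..<k}. F1 p L' - F2 p L')"
    if L': "L' \<in> permutations_of_set T'" for L'
  proof -
    from L' have d: "distinct L'" "set L' = T'" by (auto simp: permutations_of_set_def)
    have len: "length (map x L') = k" using d distinct_card[of L'] k_def by simp
    have sl: "sum_list (map x L') = - y" using d sT' by (simp add: sum_list_distinct_conv_sum_set)
    show ?thesis
      using listE[OF y _ sl] len k1 unfolding F1_def F2_def Let_def by simp
  qed
  have "y^2 * (\<Sum>L\<in>permutations_of_set T. gl (map x L)) =
       (\<Sum>L'\<in>permutations_of_set T'. y^2 * (\<Sum>p\<in>{0..k}. gl (take p (map x L') @ y # drop p (map x L'))))"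
    unfolding step1 by (rule sum_distrib_left)
  also have "\<dots> = (\<Sum>L'\<in>permutations_of_set T'. \<Sum>p\<in>{1..<k}. F1 p L' - F2 p L')"
    by (rule sum.cong[OF refl]) (rule per)
  finally have step2: "y^2 * (\<Sum>L\<in>permutations_of_set T. gl (map x L)) =
       (\<Sum>L'\<in>permutations_of_set T'. \<Sum>p\<in>{1..<k}. F1 p L' - F2 p L')" .
  have Z1: "(\<Sum>L'\<in>permutations_of_set T'. F1 p L') = 0" if p: "p \<in> {1..<k}" for p
  proof -
    define h where "h \<alpha> \<beta> = (if sum_list (map x \<alpha>) = 0 then gl (map x \<alpha>) * (y * gl (y # map x \<beta>)) else 0)" for \<alpha> \<beta>
    have "(\<Sum>L'\<in>permutations_of_set T'. F1 p L') = (\<Sum>L'\<in>permutations_of_set T'. h (take p L') (drop p L'))"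
      unfolding F1_def h_def Let_def by (simp only: take_map drop_map)
    also have "\<dots> = (\<Sum>A\<in>{A. A \<subseteq> T' \<and> card A = p}. \<Sum>\<alpha>\<in>permutations_of_set A. \<Sum>\<beta>\<in>permutations_of_set (T' - A). h \<alpha> \<beta>)"
      using split_sum[OF finT', of p h] p k_def by simp
    also have "\<dots> = 0"
    proof (rule sum.neutral, rule ballI)
      fix A assume A: "A \<in> {A. A \<subseteq> T' \<and> card A = p}"
      have finA: "finite A" using A finT' finite_subset by auto
      have Ane: "A \<noteq> {}" using A p by auto
      have cA: "card A < card T" using A p kT2 by auto
      have nzA: "\<forall>t\<in>A. x t \<noteq> 0" using A nz T'_def by auto
      have sa: "sum_list (map x \<alpha>) = sum x A" if "\<alpha> \<in> permutations_of_set A" for \<alpha>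
        using that by (simp add: permutations_of_set_def sum_list_distinct_conv_sum_set)
      show "(\<Sum>\<alpha>\<in>permutations_of_set A. \<Sum>\<beta>\<in>permutations_of_set (T' - A). h \<alpha> \<beta>) = 0"
      proof (cases "sum x A = 0")
        case True
        have "(\<Sum>\<alpha>\<in>permutations_of_set A. \<Sum>\<beta>\<in>permutations_of_set (T' - A). h \<alpha> \<beta>)
          = (\<Sum>\<alpha>\<in>permutations_of_set A. gl (map x \<alpha>) * (\<Sum>\<beta>\<in>permutations_of_set (T' - A). y * gl (y # map x \<beta>)))"
          unfolding h_def using sa True by (simp add: sum_distrib_left)
        also have "\<dots> = (\<Sum>\<alpha>\<in>permutations_of_set A. gl (map x \<alpha>)) * (\<Sum>\<beta>\<in>permutations_of_set (T' - A). y * gl (y # map x \<beta>))"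
          by (simp add: sum_distrib_right)
        also have "(\<Sum>\<alpha>\<in>permutations_of_set A. gl (map x \<alpha>)) = 0"
          using IH[OF cA finA Ane nzA True] .
        finally show ?thesis by simp
      next
        case False
        then show ?thesis unfolding h_def using sa by simp
      qed
    qed
    finally show ?thesis .
  qed
  have Z2: "(\<Sum>L'\<in>permutations_of_set T'. F2 p L') = 0" if p: "p \<in> {1..<k}" for p
  proof -
    define h where "h \<alpha> \<beta> = (if sum_list (map x \<beta>) = 0 then y * gl (map x \<alpha> @ [y]) * gl (map x \<beta>) else 0)" for \<alpha> \<beta>
    have "(\<Sum>L'\<in>permutations_of_set T'. F2 p L') = (\<Sum>L'\<in>permutations_of_set T'. h (take p L') (drop p L'))"
      unfolding F2_def h_def Let_def by (simp only: take_map drop_map)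
    also have "\<dots> = (\<Sum>A\<in>{A. A \<subseteq> T' \<and> card A = p}. \<Sum>\<alpha>\<in>permutations_of_set A. \<Sum>\<beta>\<in>permutations_of_set (T' - A). h \<alpha> \<beta>)"
      using split_sum[OF finT', of p h] p k_def by simp
    also have "\<dots> = 0"
    proof (rule sum.neutral, rule ballI)
      fix A assume A: "A \<in> {A. A \<subseteq> T' \<and> card A = p}"
      define B where "B = T' - A"
      have finA: "finite A" using A finT' finite_subset by auto
      have finB: "finite B" using finT' B_def by auto
      have cB: "card B = k - p" using A finA unfolding B_def k_def by (simp add: card_Diff_subset)
      have Bne: "B \<noteq> {}" using cB p by auto
      have cB2: "card B < card T" using cB kT2 by auto
      have nzB: "\<forall>t\<in>B. x t \<noteq> 0" using nz T'_def B_def by auto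
      have sb: "sum_list (map x \<beta>) = sum x B" if "\<beta> \<in> permutations_of_set B" for \<beta>
        using that by (simp add: permutations_of_set_def sum_list_distinct_conv_sum_set)
      show "(\<Sum>\<alpha>\<in>permutations_of_set A. \<Sum>\<beta>\<in>permutations_of_set (T' - A). h \<alpha> \<beta>) = 0"
      proof (cases "sum x B = 0")
        case True
        have "(\<Sum>\<alpha>\<in>permutations_of_set A. \<Sum>\<beta>\<in>permutations_of_set B. h \<alpha> \<beta>)
          = (\<Sum>\<alpha>\<in>permutations_of_set A. (y * gl (map x \<alpha> @ [y])) * (\<Sum>\<beta>\<in>permutations_of_set B. gl (map x \<beta>)))"
          unfolding h_def using sb True by (simp add: sum_distrib_left)
        also have "(\<Sum>\<beta>\<in>permutations_of_set B. gl (map x \<beta>)) = 0"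
          using IH[OF cB2 finB Bne nzB True] .
        finally show ?thesis by (simp add: B_def)
      next
        case False
        then show ?thesis unfolding h_def using sb by (simp add: B_def)
      qed
    qed
    finally show ?thesis .
  qed
  have "y^2 * (\<Sum>L\<in>permutations_of_set T. gl (map x L)) =
       (\<Sum>p\<in>{1..<k}. (\<Sum>L'\<in>permutations_of_set T'. F1 p L') - (\<Sum>L'\<in>permutations_of_set T'. F2 p L'))"
    unfolding step2 by (subst sum.swap) (simp add: sum_subtractf)
  also have "\<dots> = 0" using Z1 Z2 by simp
  finally show ?case using y by simp
qed


lemma G_eq_gl:
  fixes x :: "nat \<Rightarrow> real"
  shows "G n (perm_vec \<sigma> x) = gl (map x (map \<sigma> [1..<Suc n]))"
proof -
  have e: "{1..n-1} = {1..<n}" by auto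
  show ?thesis
    unfolding G_def gl_def e
  proof (intro prod.cong)
    show "{1..<n} = {1..<length (map x (map \<sigma> [1..<Suc n]))}" by (simp del: upt_Suc)
    fix i assume i: "i \<in> {1..<length (map x (map \<sigma> [1..<Suc n]))}"
    then have il: "i \<le> n" by (simp del: upt_Suc)
    have "take i (map x (map \<sigma> [1..<Suc n])) = map (\<lambda>j. x (\<sigma> j)) [1..<Suc i]"
      using il by (simp add: take_map min_def del: upt_Suc)
    then have "sum_list (take i (map x (map \<sigma> [1..<Suc n]))) = (\<Sum>j\<in>{1..<Suc i}. x (\<sigma> j))"
      by (simp add: sum_set_upt_conv_sum_list_nat[symmetric])
    also have "\<dots> = partial_sum (perm_vec \<sigma> x) i"
      unfolding partial_sum_def perm_vec_def by (intro sum.cong) auto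
    finally show "inverse (partial_sum (perm_vec \<sigma> x) i) = inverse (sum_list (take i (map x (map \<sigma> [1..<Suc n]))))"
      by simp
  qed
qed

lemma bij_perm_list:
  "bij_betw (\<lambda>\<sigma>. map \<sigma> [1..<Suc n]) {\<sigma>. \<sigma> permutes {1..n}} (permutations_of_set {1..n})"
proof (rule bij_betw_imageI)
  show "inj_on (\<lambda>\<sigma>. map \<sigma> [1..<Suc n]) {\<sigma>. \<sigma> permutes {1..n}}"
  proof (rule inj_onI)
    fix \<sigma> \<tau> assume s: "\<sigma> \<in> {\<sigma>. \<sigma> permutes {1..n}}" and t: "\<tau> \<in> {\<sigma>. \<sigma> permutes {1..n}}"
      and e: "map \<sigma> [1..<Suc n] = map \<tau> [1..<Suc n]"
    show "\<sigma> = \<tau>"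
    proof
      fix i show "\<sigma> i = \<tau> i"
      proof (cases "i \<in> {1..n}")
        case True
        then have "i \<in> set [1..<Suc n]" by auto
        then show ?thesis using e by (metis map_eq_conv)
      next
        case False
        then show ?thesis using s t by (simp add: permutes_not_in)
      qed
    qed
  qed
  show "(\<lambda>\<sigma>. map \<sigma> [1..<Suc n]) ` {\<sigma>. \<sigma> permutes {1..n}} = permutations_of_set {1..n}"
  proof
    show "(\<lambda>\<sigma>. map \<sigma> [1..<Suc n]) ` {\<sigma>. \<sigma> permutes {1..n}} \<subseteq> permutations_of_set {1..n}"
    proof
      fix L assume "L \<in> (\<lambda>\<sigma>. map \<sigma> [1..<Suc n]) ` {\<sigma>. \<sigma> permutes {1..n}}"
      then obtain \<sigma> where s: "\<sigma> permutes {1..n}" and L: "L = map \<sigma> [1..<Suc n]" by auto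
      have st: "set [1..<Suc n] = {1..n}" by auto
      have "distinct L" unfolding L using permutes_inj_on[OF s] st by (simp add: distinct_map)
      moreover have "set L = {1..n}" unfolding L using permutes_image[OF s] st by simp
      ultimately show "L \<in> permutations_of_set {1..n}" by (simp add: permutations_of_set_def)
    qed
    show "permutations_of_set {1..n} \<subseteq> (\<lambda>\<sigma>. map \<sigma> [1..<Suc n]) ` {\<sigma>. \<sigma> permutes {1..n}}"
    proof
      fix L assume L: "L \<in> permutations_of_set {1..n}"
      then have d: "distinct L" and sL: "set L = {1..n}" by (auto simp: permutations_of_set_def)
      have len: "length L = n" using d sL distinct_card[of L] by simp
      define \<sigma> where "\<sigma> i = (if i \<in> {1..n} then L ! (i - 1) else i)" for i
      have img: "\<sigma> ` {1..n} = {1..n}"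
      proof -
        have "\<sigma> ` {1..n} = (\<lambda>i. L ! (i - 1)) ` {1..n}" unfolding \<sigma>_def by auto
        also have "\<dots> = (\<lambda>j. L ! j) ` {..<n}"
        proof
          show "(\<lambda>i. L ! (i - 1)) ` {1..n} \<subseteq> (!) L ` {..<n}" by force
          show "(!) L ` {..<n} \<subseteq> (\<lambda>i. L ! (i - 1)) ` {1..n}"
          proof
            fix z assume "z \<in> (!) L ` {..<n}"
            then obtain j where j: "j < n" "z = L ! j" by auto
            then have "Suc j \<in> {1..n}" "z = L ! (Suc j - 1)" by auto
            then show "z \<in> (\<lambda>i. L ! (i - 1)) ` {1..n}" by blast
          qed
        qed
        also have "\<dots> = set L" using len by (auto simp: in_set_conv_nth)
        finally show ?thesis using sL by simp
      qed
      have inj: "inj_on \<sigma> {1..n}"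
      proof (rule inj_onI)
        fix a b assume a: "a \<in> {1..n}" and b: "b \<in> {1..n}" and e: "\<sigma> a = \<sigma> b"
        then have "L ! (a - 1) = L ! (b - 1)" unfolding \<sigma>_def by simp
        moreover have "a - 1 < length L" "b - 1 < length L" using a b len by auto
        ultimately have "a - 1 = b - 1" using d nth_eq_iff_index_eq by blast
        then show "a = b" using a b by auto
      qed
      have "\<sigma> permutes {1..n}"
        using inj img by (intro bij_imp_permutes) (auto simp: bij_betw_def \<sigma>_def)
      moreover have "map \<sigma> [1..<Suc n] = L"
        by (rule nth_equalityI) (auto simp: len \<sigma>_def simp del: upt_Suc)
      ultimately show "L \<in> (\<lambda>\<sigma>. map \<sigma> [1..<Suc n]) ` {\<sigma>. \<sigma> permutes {1..n}}" by force
    qed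
  qed
qed

theorem lemmaC4:
  fixes n :: nat and x :: "nat \<Rightarrow> real"
  assumes "n \<ge> 2"
    and "\<forall>i\<in>{1..n}. x i \<noteq> 0"
    and "(\<Sum>i=1..n. x i) = 0"
  shows "(\<Sum>\<sigma> \<in> {\<sigma>. \<sigma> permutes {1..n} \<and> allowed n (perm_vec \<sigma> x)}. G n (perm_vec \<sigma> x)) = 0"
proof -
  have finP: "finite {\<sigma>. \<sigma> permutes {1..n}}" by (rule finite_permutations) simp
  have "(\<Sum>\<sigma> \<in> {\<sigma>. \<sigma> permutes {1..n} \<and> allowed n (perm_vec \<sigma> x)}. G n (perm_vec \<sigma> x))
      = (\<Sum>\<sigma> \<in> {\<sigma>. \<sigma> permutes {1..n}}. G n (perm_vec \<sigma> x))"
  proof (rule sum.mono_neutral_left[OF finP])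
    show "{\<sigma>. \<sigma> permutes {1..n} \<and> allowed n (perm_vec \<sigma> x)} \<subseteq> {\<sigma>. \<sigma> permutes {1..n}}" by auto
    show "\<forall>\<sigma>\<in>{\<sigma>. \<sigma> permutes {1..n}} - {\<sigma>. \<sigma> permutes {1..n} \<and> allowed n (perm_vec \<sigma> x)}. G n (perm_vec \<sigma> x) = 0"
    proof
      fix \<sigma> assume "\<sigma> \<in> {\<sigma>. \<sigma> permutes {1..n}} - {\<sigma>. \<sigma> permutes {1..n} \<and> allowed n (perm_vec \<sigma> x)}"
      then obtain i where "i \<in> {1..n-1}" "partial_sum (perm_vec \<sigma> x) i = 0"
        unfolding allowed_def by auto
      then show "G n (perm_vec \<sigma> x) = 0" unfolding G_def by (intro prod_zero) auto
    qed
  qed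
  also have "\<dots> = (\<Sum>\<sigma> \<in> {\<sigma>. \<sigma> permutes {1..n}}. gl (map x (map \<sigma> [1..<Suc n])))"
    by (simp add: G_eq_gl)
  also have "\<dots> = (\<Sum>L\<in>permutations_of_set {1..n}. gl (map x L))"
    using sum.reindex_bij_betw[OF bij_perm_list, of "\<lambda>L. gl (map x L)" n] by simp
  also have "\<dots> = 0"
    using main_zero[of "{1..n}" x] assms by auto
  finally show ?thesis .
qed

end
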